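(* $\mathrm{Aut}_0(H)$ is a normal subgroup of $\mathrm{Aut}_c(H)$, and $\mathrm{Aut}_c(H)$ is the internal semidirect product of $\mathrm{Aut}_0(H)$ and $\Theta=\{\theta_r:r\in\mathbb{Z}\}$, where $\theta_r:H\to H$ is the linear map $\theta_r(x^ny^m)=x^{n+r}y^m$.
   Context: Let $k$ be a field and $0\neq q\in k$ not a root of unity. $H=k_q[x,x^{-1},y]$ is the $k$-algebra generated by $x,x^{-1},y$ with $xx^{-1}=x^{-1}x=1$, $yx=qxy$, a Hopf algebra with $\Delta(x)=x\otimes x$, $\Delta(x^{-1})=x^{-1}\otimes x^{-1}$, $\Delta(y)=y\otimes x+1\otimes y$, $\varepsilon(x)=1$, $\varepsilon(y)=0$; $\{x^ny^m:n\in\mathbb{Z},m\in\mathbb{N}\}$ is a $k$-basis. $\mathrm{Aut}_c(H)$ is the group under composition of coalgebra automorphisms of $H$ and $\mathrm{Aut}_0(H)=\{\phi\in\mathrm{Aut}_c(H):\phi(1)=1\}$. (Each $\theta_r$ is a coalgebra automorphism of $H$.) *)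

theory Defs
  imports Main "HOL-Algebra.Bij" "HOL-Algebra.Coset"
begin

text \<open>Model of H = k_q[x,x^-1,y]: an element is its coefficient function on the
  basis x^n y^m, indexed by (n,m) :: int \<times> nat, with finite support.
  H \<otimes> H is modelled with the tensor basis (x^a y^b) \<otimes> (x^c y^d),
  indexed by ((a,b),(c,d)).\<close>

type_synonym idx = "int \<times> nat"

definition supp :: "('a \<Rightarrow> 'k::zero) \<Rightarrow> 'a set" where
  "supp f = {u. f u \<noteq> 0}"

definition fsupp :: "('a \<Rightarrow> 'k::zero) set" where
  "fsupp = {f. finite (supp f)}"

abbreviation Hc :: "(idx \<Rightarrow> 'k::zero) set" where
  "Hc \<equiv> fsupp"

definition bas :: "'a \<Rightarrow> 'a \<Rightarrow> 'k::{zero,one}" where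
  "bas u = (\<lambda>v. if v = u then 1 else 0)"

text \<open>Product of basis monomials: (x^a y^b)(x^c y^d) = q^(b c) x^(a+c) y^(b+d),
  from y x = q x y (and hence y x^-1 = q^-1 x^-1 y).\<close>
definition mm :: "'k::field \<Rightarrow> idx \<Rightarrow> idx \<Rightarrow> 'k \<times> idx" where
  "mm q u v = (q powi (int (snd u) * fst v), (fst u + fst v, snd u + snd v))"

definition tmul :: "'k::field \<Rightarrow> (idx \<times> idx \<Rightarrow> 'k) \<Rightarrow> (idx \<times> idx \<Rightarrow> 'k) \<Rightarrow> (idx \<times> idx \<Rightarrow> 'k)" where
  "tmul q F G = (\<lambda>z. \<Sum>p\<in>supp F. \<Sum>r\<in>supp G.
      (if (snd (mm q (fst p) (fst r)), snd (mm q (snd p) (snd r))) = z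
       then F p * G r * fst (mm q (fst p) (fst r)) * fst (mm q (snd p) (snd r)) else 0))"

definition tone :: "idx \<times> idx \<Rightarrow> 'k::field" where
  "tone = bas ((0,0),(0,0))"

definition tpow :: "'k::field \<Rightarrow> (idx \<times> idx \<Rightarrow> 'k) \<Rightarrow> nat \<Rightarrow> (idx \<times> idx \<Rightarrow> 'k)" where
  "tpow q F n = (tmul q F ^^ n) tone"

text \<open>\<Delta>(x) = x \<otimes> x, \<Delta>(x^-1) = x^-1 \<otimes> x^-1, \<Delta>(y) = y \<otimes> x + 1 \<otimes> y.\<close>
definition Dx :: "idx \<times> idx \<Rightarrow> 'k::field" where "Dx = bas ((1,0),(1,0))"
definition Dxi :: "idx \<times> idx \<Rightarrow> 'k::field" where "Dxi = bas ((-1,0),(-1,0))"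
definition Dy :: "idx \<times> idx \<Rightarrow> 'k::field" where "Dy = (\<lambda>w. bas ((0,1),(1,0)) w + bas ((0,0),(0,1)) w)"

text \<open>\<Delta> is an algebra map, so \<Delta>(x^n y^m) = \<Delta>(x)^n \<Delta>(y)^m (with \<Delta>(x^-1) for n < 0).\<close>
definition Delta_bas :: "'k::field \<Rightarrow> idx \<Rightarrow> (idx \<times> idx \<Rightarrow> 'k)" where
  "Delta_bas q u = tmul q (if fst u \<ge> 0 then tpow q Dx (nat (fst u)) else tpow q Dxi (nat (- fst u)))
                          (tpow q Dy (snd u))"

definition Delta :: "'k::field \<Rightarrow> (idx \<Rightarrow> 'k) \<Rightarrow> (idx \<times> idx \<Rightarrow> 'k)" where
  "Delta q f = (\<lambda>z. \<Sum>u\<in>supp f. f u * Delta_bas q u z)"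

text \<open>\<epsilon> is an algebra map with \<epsilon>(x)=1, \<epsilon>(y)=0, so \<epsilon>(x^n y^m) = 1 if m = 0, else 0.\<close>
definition eps :: "(idx \<Rightarrow> 'k::field) \<Rightarrow> 'k" where
  "eps f = (\<Sum>u\<in>supp f. f u * (if snd u = 0 then 1 else 0))"

definition tensmap :: "((idx \<Rightarrow> 'k) \<Rightarrow> (idx \<Rightarrow> 'k)) \<Rightarrow> (idx \<times> idx \<Rightarrow> 'k::field) \<Rightarrow> (idx \<times> idx \<Rightarrow> 'k)" where
  "tensmap \<phi> F = (\<lambda>w. \<Sum>p\<in>supp F. F p * \<phi> (bas (fst p)) (fst w) * \<phi> (bas (snd p)) (snd w))"

definition klinear :: "((idx \<Rightarrow> 'k::field) \<Rightarrow> (idx \<Rightarrow> 'k)) \<Rightarrow> bool" where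
  "klinear \<phi> \<longleftrightarrow> (\<forall>f\<in>Hc. \<forall>g\<in>Hc. \<phi> (\<lambda>u. f u + g u) = (\<lambda>u. \<phi> f u + \<phi> g u)) \<and>
                   (\<forall>c. \<forall>f\<in>Hc. \<phi> (\<lambda>u. c * f u) = (\<lambda>u. c * \<phi> f u))"

definition Autc :: "'k::field \<Rightarrow> ((idx \<Rightarrow> 'k) \<Rightarrow> (idx \<Rightarrow> 'k)) set" where
  "Autc q = {\<phi> \<in> Bij Hc. klinear \<phi> \<and>
      (\<forall>f\<in>Hc. Delta q (\<phi> f) = tensmap \<phi> (Delta q f) \<and> eps (\<phi> f) = eps f)}"

definition AutcG :: "'k::field \<Rightarrow> ((idx \<Rightarrow> 'k) \<Rightarrow> (idx \<Rightarrow> 'k)) monoid" where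
  "AutcG q = (BijGroup Hc) \<lparr>carrier := Autc q\<rparr>"

definition Aut0 :: "'k::field \<Rightarrow> ((idx \<Rightarrow> 'k) \<Rightarrow> (idx \<Rightarrow> 'k)) set" where
  "Aut0 q = {\<phi> \<in> Autc q. \<phi> (bas (0,0)) = bas (0,0)}"

definition theta :: "int \<Rightarrow> (idx \<Rightarrow> 'k::field) \<Rightarrow> (idx \<Rightarrow> 'k)" where
  "theta r = restrict (\<lambda>f u. f (fst u - r, snd u)) Hc"

definition Theta :: "((idx \<Rightarrow> 'k::field) \<Rightarrow> (idx \<Rightarrow> 'k)) set" where
  "Theta = range theta"

end

theory Submission
  imports Defs
begin

lemma bas_apply: "bas u v = (if v = u then 1 else 0)" by (simp add: bas_def)

lemma supp_bas[simp]: "supp (bas u :: _ \<Rightarrow> 'k::zero_neq_one) = {u}"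
  by (auto simp: supp_def bas_def)

lemma bas_in[simp]: "(bas u :: _ \<Rightarrow> 'k::zero_neq_one) \<in> fsupp"
  by (simp add: fsupp_def)

lemma in_fsupp: "f \<in> fsupp \<longleftrightarrow> finite (supp f)" by (simp add: fsupp_def)

lemma sum_supp_delta:
  fixes f :: "'a \<Rightarrow> 'k::comm_ring_1"
  assumes "finite (supp f)"
  shows "(\<Sum>u\<in>supp f. f u * (if u = u0 \<and> P then g u else 0)) = (if P then f u0 * g u0 else 0)"
proof -
  have "(\<Sum>u\<in>supp f. f u * (if u = u0 \<and> P then g u else 0)) = (\<Sum>u\<in>supp f. if u = u0 then (if P then f u * g u else 0) else 0)"
    by (rule sum.cong) auto
  also have "\<dots> = (if u0 \<in> supp f then (if P then f u0 * g u0 else 0) else 0)"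
    using assms by (simp add: sum.delta)
  also have "\<dots> = (if P then f u0 * g u0 else 0)" by (auto simp: supp_def)
  finally show ?thesis .
qed

lemma sum_supp_over:
  fixes f :: "'a \<Rightarrow> 'k::comm_ring_1"
  assumes "finite A" "supp f \<subseteq> A"
  shows "(\<Sum>u\<in>supp f. f u * g u) = (\<Sum>u\<in>A. f u * g u)"
  by (rule sum.mono_neutral_left) (use assms in \<open>auto simp: supp_def\<close>)

fun cb :: "'k::field \<Rightarrow> nat \<Rightarrow> nat \<Rightarrow> 'k" where
  "cb q 0 i = (if i = 0 then 1 else 0)"
| "cb q (Suc m) i = (if i = 0 then 0 else cb q m (i - 1)) + q ^ i * cb q m i"

lemma cb_gt: "i > m \<Longrightarrow> cb q m i = 0"
  by (induction m arbitrary: i) auto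

lemma cb_diag[simp]: "cb q m m = 1"
  by (induction m) (auto simp: cb_gt)

lemma cb_zero[simp]: "cb q m 0 = 1"
  by (induction m) auto

lemma cb_one: "cb q m 1 = (\<Sum>j<m. q ^ j)"
proof (induction m)
  case 0 show ?case by simp
next
  case (Suc m)
  have "cb q (Suc m) 1 = 1 + q * cb q m 1" by simp
  also have "\<dots> = 1 + (\<Sum>j<m. q ^ Suc j)" using Suc by (simp add: sum_distrib_left)
  also have "\<dots> = (\<Sum>j<Suc m. q ^ j)" by (simp only: sum.lessThan_Suc_shift) simp
  finally show ?case .
qed

lemma cb_one_nz:
  fixes q :: "'k::field"
  assumes "\<forall>n::nat. n > 0 \<longrightarrow> q ^ n \<noteq> 1" "m > 0"
  shows "cb q m 1 \<noteq> 0"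
proof
  assume "cb q m 1 = 0"
  then have "(\<Sum>j<m. q ^ j) = 0" by (simp only: cb_one)
  then have "1 - q ^ m = 0" by (simp only: one_diff_power_eq) simp
  with assms show False by auto
qed

lemma tmul_over:
  assumes "finite S" "supp F \<subseteq> S" "finite T" "supp G \<subseteq> T"
  shows "tmul q F G z = (\<Sum>p\<in>S. \<Sum>r\<in>T.
      (if (snd (mm q (fst p) (fst r)), snd (mm q (snd p) (snd r))) = z
       then F p * G r * fst (mm q (fst p) (fst r)) * fst (mm q (snd p) (snd r)) else 0))"
  unfolding tmul_def
proof -
  let ?h = "\<lambda>p r. (if (snd (mm q (fst p) (fst r)), snd (mm q (snd p) (snd r))) = z
       then F p * G r * fst (mm q (fst p) (fst r)) * fst (mm q (snd p) (snd r)) else 0)"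
  have 1: "(\<Sum>r\<in>supp G. ?h p r) = (\<Sum>r\<in>T. ?h p r)" for p
    by (rule sum.mono_neutral_left[OF assms(3,4)]) (auto simp: supp_def)
  have 2: "(\<Sum>p\<in>supp F. \<Sum>r\<in>T. ?h p r) = (\<Sum>p\<in>S. \<Sum>r\<in>T. ?h p r)"
  proof (rule sum.mono_neutral_left[OF assms(1,2)], rule ballI)
    fix p assume "p \<in> S - supp F"
    then have "F p = 0" by (auto simp: supp_def)
    then show "(\<Sum>r\<in>T. ?h p r) = 0" by (intro sum.neutral) (simp add: \<open>F p = 0\<close>)
  qed
  show "(\<Sum>p\<in>supp F. \<Sum>r\<in>supp G. ?h p r) = (\<Sum>p\<in>S. \<Sum>r\<in>T. ?h p r)"
    using 1 2 by simp
qed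

lemma tmul_bas_bas:
  "tmul q (bas p) (bas r) z = (if (snd (mm q (fst p) (fst r)), snd (mm q (snd p) (snd r))) = z
       then fst (mm q (fst p) (fst r)) * fst (mm q (snd p) (snd r)) else 0)"
  by (subst tmul_over[of "{p}" _ "{r}"]) (simp_all, simp add: bas_def)

definition DB :: "'k::field \<Rightarrow> int \<Rightarrow> nat \<Rightarrow> idx \<times> idx \<Rightarrow> 'k" where
  "DB q n m z = (if fst (fst z) = n \<and> fst (snd z) = n + int (snd (fst z)) \<and> snd (fst z) + snd (snd z) = m
                then cb q m (snd (fst z)) else 0)"

lemma supp_DB: "supp (DB q n m) \<subseteq> (\<lambda>i. ((n,i),(n + int i, m - i))) ` {..m}"
  by (auto simp: supp_def DB_def image_iff)

lemma inj_DBidx: "inj_on (\<lambda>i. ((n,i),(n + int i, m - i))) A"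
  by (auto simp: inj_on_def)

lemma sum_img_DB:
  "(\<Sum>r\<in>(\<lambda>i. ((n,i),(n + int i, m - i))) ` {..m}. h r) = (\<Sum>i\<le>m. h ((n,i),(n + int i, m - i)))"
  by (subst sum.reindex[OF inj_DBidx]) simp

lemma sum_img_DB0:
  "(\<Sum>r\<in>(\<lambda>i. ((0::int,i),(int i, m - i))) ` {..m}. h r) = (\<Sum>i\<le>m. h ((0,i),(int i, m - i)))"
  using sum_img_DB[where n=0 and m=m and h=h] by simp

lemma tpow_Dy: "tpow q Dy m = DB q 0 m"
proof (induction m)
  case 0
  show ?case by (auto simp: tpow_def tone_def DB_def bas_def fun_eq_iff)
next
  case (Suc m)
  have "tpow q Dy (Suc m) = tmul q Dy (DB q 0 m)"
    using Suc by (simp add: tpow_def)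
  also have "\<dots> = DB q 0 (Suc m)"
  proof
    fix z :: "idx \<times> idx"
    obtain a b c d where z: "z = ((a,b),(c,d))" by (metis prod.collapse)
    let ?p1 = "((0::int,1::nat),(1::int,0::nat))" and ?p2 = "((0::int,0::nat),(0::int,1::nat))"
    have sD: "supp (Dy :: _ \<Rightarrow> 'a) \<subseteq> {?p1, ?p2}" by (auto simp: supp_def Dy_def bas_def)
    have "tmul q Dy (DB q 0 m) ((a,b),(c,d)) = (\<Sum>i\<le>m. if 0 = a \<and> Suc i = b \<and> 1 + int i = c \<and> m - i = d then cb q m i else 0)
                   + (\<Sum>i\<le>m. if 0 = a \<and> i = b \<and> int i = c \<and> Suc m - i = d then cb q m i * q ^ i else 0)"
      by (subst tmul_over[OF _ sD _ supp_DB]; simp add: sum_img_DB0 mm_def Dy_def bas_def DB_def cong: if_cong)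
    also have "\<dots> = DB q 0 (Suc m) ((a,b),(c,d))"
    proof (cases "a = 0 \<and> c = int b \<and> b + d = Suc m")
      case False
      then have "(\<Sum>i\<le>m. if 0 = a \<and> Suc i = b \<and> 1 + int i = c \<and> m - i = d then cb q m i else 0) = 0"
        "(\<Sum>i\<le>m. if 0 = a \<and> i = b \<and> int i = c \<and> Suc m - i = d then cb q m i * q ^ i else 0) = 0"
        by (auto intro!: sum.neutral)
      moreover have "\<not> (a = 0 \<and> c = 0 + int b \<and> b + d = Suc m)" using False by (simp only: add_0_left not_False_eq_True)
      then have "DB q 0 (Suc m) ((a,b),(c,d)) = 0" unfolding DB_def fst_conv snd_conv by (rule if_not_P)
      ultimately show ?thesis by simp
    next
      case True
      have A: "(\<Sum>i\<le>m. if 0 = a \<and> Suc i = b \<and> 1 + int i = c \<and> m - i = d then cb q m i else 0)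
          = (\<Sum>i\<le>m. if i = b - 1 then (if b \<ge> 1 then cb q m i else 0) else 0)"
      proof (rule sum.cong[OF refl])
        fix i assume "i \<in> {..m}"
        have "(0 = a \<and> Suc i = b \<and> 1 + int i = c \<and> m - i = d) \<longleftrightarrow> (i = b - 1 \<and> b \<ge> 1)"
          using True by linarith
        then show "(if 0 = a \<and> Suc i = b \<and> 1 + int i = c \<and> m - i = d then cb q m i else 0)
            = (if i = b - 1 then (if b \<ge> 1 then cb q m i else 0) else 0)" by auto
      qed
      have B: "(\<Sum>i\<le>m. if 0 = a \<and> i = b \<and> int i = c \<and> Suc m - i = d then cb q m i * q ^ i else 0)
          = (\<Sum>i\<le>m. if i = b then cb q m i * q ^ i else 0)"
        by (rule sum.cong) (use True in \<open>auto simp: cb_gt\<close>)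
      have bm: "b - 1 \<le> m" using True by auto
      have A2: "(\<Sum>i\<le>m. if i = b - 1 then (if b \<ge> 1 then cb q m i else 0) else 0) = (if b = 0 then 0 else cb q m (b - 1))"
        using bm by (subst sum.delta) auto
      have B2: "(\<Sum>i\<le>m. if i = b then cb q m i * q ^ i else 0) = q ^ b * cb q m b"
        by (subst sum.delta) (auto simp: cb_gt)
      have D: "DB q 0 (Suc m) ((a,b),(c,d)) = cb q (Suc m) b"
        using True by (simp add: DB_def del: cb.simps)
      show ?thesis unfolding A B A2 B2 D by (simp only: cb.simps)
    qed
    finally show "tmul q Dy (DB q 0 m) z = DB q 0 (Suc m) z" by (simp add: z)
  qed
  finally show ?case .
qed

lemma tpow_Dx: "tpow q Dx k = bas ((int k,0),(int k,0))"
proof (induction k)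
  case 0 show ?case by (simp add: tpow_def tone_def)
next
  case (Suc k)
  have "tpow q Dx (Suc k) = tmul q Dx (bas ((int k,0),(int k,0)))" using Suc by (simp add: tpow_def)
  also have "\<dots> = bas ((int (Suc k),0),(int (Suc k),0))"
    unfolding Dx_def by (rule ext) (simp add: tmul_bas_bas mm_def bas_apply)
  finally show ?case .
qed

lemma tpow_Dxi: "tpow q Dxi k = bas ((- int k,0),(- int k,0))"
proof (induction k)
  case 0 show ?case by (simp add: tpow_def tone_def)
next
  case (Suc k)
  have "tpow q Dxi (Suc k) = tmul q Dxi (bas ((- int k,0),(- int k,0)))" using Suc by (simp add: tpow_def)
  also have "\<dots> = bas ((- int (Suc k),0),(- int (Suc k),0))"
    unfolding Dxi_def by (rule ext) (simp add: tmul_bas_bas mm_def bas_apply)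
  finally show ?case .
qed

lemma Delta_bas_DB': "Delta_bas q (n,m) = DB q n m"
proof
  fix z :: "idx \<times> idx"
  obtain a b c d where z: "z = ((a,b),(c,d))" by (metis prod.collapse)
  have X: "(if fst (n,m) \<ge> 0 then tpow q Dx (nat (fst (n,m))) else tpow q Dxi (nat (- fst (n,m)))) = bas ((n,0),(n,0))"
    by (auto simp: tpow_Dx tpow_Dxi)
  have "Delta_bas q (n,m) ((a,b),(c,d)) = (\<Sum>i\<le>m. (if n = a \<and> i = b \<and> n + int i = c \<and> m - i = d then DB q 0 m ((0,i),(int i, m - i)) else 0))"
    unfolding Delta_bas_def X tpow_Dy snd_conv
    by (subst tmul_over[OF _ _ _ supp_DB, where S="{((n,0),(n,0))}"]; simp add: sum_img_DB0 bas_def mm_def supp_def cong: if_cong)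
  also have "\<dots> = DB q n m ((a,b),(c,d))"
  proof (cases "a = n \<and> c = n + int b \<and> b + d = m")
    case True
    then have "(\<Sum>i\<le>m. (if n = a \<and> i = b \<and> n + int i = c \<and> m - i = d then DB q 0 m ((0,i),(int i, m - i)) else 0))
       = (\<Sum>i\<le>m. if i = b then cb q m i else 0)"
      by (intro sum.cong) (auto simp: DB_def)
    with True show ?thesis by (auto simp: DB_def)
  next
    case False
    then show ?thesis by (auto simp: DB_def intro!: sum.neutral)
  qed
  finally show "Delta_bas q (n,m) z = DB q n m z" by (simp add: z)
qed

lemma Delta_bas_DB: "Delta_bas q u = DB q (fst u) (snd u)"
  using Delta_bas_DB'[of q "fst u" "snd u"] by simp

lemma Delta_eq:
  assumes "f \<in> fsupp"
  shows "Delta q f z = (if fst (snd z) = fst (fst z) + int (snd (fst z))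
     then f (fst (fst z), snd (fst z) + snd (snd z)) * cb q (snd (fst z) + snd (snd z)) (snd (fst z)) else 0)"
proof -
  have "Delta q f z = (\<Sum>u\<in>supp f. f u * (if u = (fst (fst z), snd (fst z) + snd (snd z)) \<and> fst (snd z) = fst (fst z) + int (snd (fst z))
      then cb q (snd (fst z) + snd (snd z)) (snd (fst z)) else 0))"
    unfolding Delta_def Delta_bas_DB by (intro sum.cong refl) (auto simp: DB_def)
  also have "\<dots> = (if fst (snd z) = fst (fst z) + int (snd (fst z))
     then f (fst (fst z), snd (fst z) + snd (snd z)) * cb q (snd (fst z) + snd (snd z)) (snd (fst z)) else 0)"
    by (subst sum_supp_delta) (use assms in \<open>auto simp: fsupp_def\<close>)
  finally show ?thesis .
qed


lemma fsupp_add: "(f :: 'a \<Rightarrow> 'k::field) \<in> fsupp \<Longrightarrow> g \<in> fsupp \<Longrightarrow> (\<lambda>u. f u + g u) \<in> fsupp"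
proof -
  assume a: "f \<in> fsupp" "g \<in> fsupp"
  have "supp (\<lambda>u. f u + g u) \<subseteq> supp f \<union> supp g" by (auto simp: supp_def)
  with a show ?thesis by (auto simp: fsupp_def intro: finite_subset)
qed

lemma fsupp_smult: "(f :: 'a \<Rightarrow> 'k::field) \<in> fsupp \<Longrightarrow> (\<lambda>u. c * f u) \<in> fsupp"
proof -
  assume a: "f \<in> fsupp"
  have "supp (\<lambda>u. c * f u) \<subseteq> supp f" by (auto simp: supp_def)
  with a show ?thesis by (auto simp: fsupp_def intro: finite_subset)
qed

lemma fsupp_sum: "finite A \<Longrightarrow> (\<lambda>v. \<Sum>u\<in>A. c u * (bas u v :: 'k::comm_ring_1)) \<in> fsupp"
proof -
  assume A: "finite A"
  have "supp (\<lambda>v. \<Sum>u\<in>A. c u * (bas u v :: 'k)) \<subseteq> A"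
  proof
    fix v assume "v \<in> supp (\<lambda>v. \<Sum>u\<in>A. c u * (bas u v :: 'k))"
    then have "(\<Sum>u\<in>A. c u * (bas u v :: 'k)) \<noteq> 0" by (simp add: supp_def)
    then obtain u where "u \<in> A" "c u * (bas u v :: 'k) \<noteq> 0" by (meson sum.neutral)
    then show "v \<in> A" by (auto simp: bas_def split: if_splits)
  qed
  with A show ?thesis by (auto simp: fsupp_def intro: finite_subset)
qed

lemma fsupp_zero: "(\<lambda>u. 0) \<in> fsupp" by (simp add: fsupp_def supp_def)

lemma klin_add: "klinear \<phi> \<Longrightarrow> f \<in> Hc \<Longrightarrow> g \<in> Hc \<Longrightarrow> \<phi> (\<lambda>u. f u + g u) = (\<lambda>u. \<phi> f u + \<phi> g u)"
  by (simp add: klinear_def)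

lemma klin_smult: "klinear \<phi> \<Longrightarrow> f \<in> Hc \<Longrightarrow> \<phi> (\<lambda>u. c * f u) = (\<lambda>u. c * \<phi> f u)"
  by (simp add: klinear_def)

lemma lin_zero:
  fixes \<phi> :: "(idx \<Rightarrow> 'k::field) \<Rightarrow> (idx \<Rightarrow> 'k)"
  assumes "klinear \<phi>" shows "\<phi> (\<lambda>u. 0) = (\<lambda>u. 0)"
proof -
  have "\<phi> (\<lambda>u. 0 * (\<lambda>u. 0) u) = (\<lambda>u. 0 * \<phi> (\<lambda>u. 0) u)"
    by (rule klin_smult[OF assms fsupp_zero])
  then show ?thesis by simp
qed

lemma lin_sum:
  fixes \<phi> :: "(idx \<Rightarrow> 'k::field) \<Rightarrow> (idx \<Rightarrow> 'k)"
  assumes "klinear \<phi>" "finite A"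
  shows "\<phi> (\<lambda>v. \<Sum>u\<in>A. c u * bas u v) = (\<lambda>v. \<Sum>u\<in>A. c u * \<phi> (bas u) v)"
  using assms(2)
proof (induction A rule: finite_induct)
  case empty
  show ?case using lin_zero[OF assms(1)] by simp
next
  case (insert x A)
  have "\<phi> (\<lambda>v. \<Sum>u\<in>insert x A. c u * bas u v) = \<phi> (\<lambda>v. c x * bas x v + (\<Sum>u\<in>A. c u * bas u v))"
    using insert by simp
  also have "\<dots> = (\<lambda>v. \<phi> (\<lambda>v. c x * bas x v) v + \<phi> (\<lambda>v. \<Sum>u\<in>A. c u * bas u v) v)"
    by (rule klin_add[OF assms(1) fsupp_smult[OF bas_in] fsupp_sum[OF insert(1)]])
  also have "\<phi> (\<lambda>v. c x * bas x v) = (\<lambda>v. c x * \<phi> (bas x) v)"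
    using assms(1) unfolding klinear_def by simp
  finally show ?case using insert by simp
qed

lemma expand_bas:
  fixes g :: "idx \<Rightarrow> 'k::comm_ring_1"
  assumes "finite A" "supp g \<subseteq> A"
  shows "g = (\<lambda>v. \<Sum>u\<in>A. g u * bas u v)"
proof
  fix v
  have "(\<Sum>u\<in>A. g u * bas u v) = (\<Sum>u\<in>A. if u = v then g v else 0)"
    by (rule sum.cong) (auto simp: bas_def)
  also have "\<dots> = g v" using assms by (auto simp: sum.delta' supp_def)
  finally show "g v = (\<Sum>u\<in>A. g u * bas u v)" by simp
qed

lemma lin_expand:
  fixes \<phi> :: "(idx \<Rightarrow> 'k::field) \<Rightarrow> (idx \<Rightarrow> 'k)"
  assumes "klinear \<phi>" "finite A" "supp g \<subseteq> A"
  shows "\<phi> g v = (\<Sum>u\<in>A. g u * \<phi> (bas u) v)"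
proof -
  have "\<phi> g = \<phi> (\<lambda>v. \<Sum>u\<in>A. g u * bas u v)" using expand_bas[OF assms(2,3)] by simp
  then show ?thesis using lin_sum[OF assms(1,2)] by simp
qed

lemma tensmap_over:
  assumes "finite S" "supp F \<subseteq> S"
  shows "tensmap \<phi> F w = (\<Sum>p\<in>S. F p * \<phi> (bas (fst p)) (fst w) * \<phi> (bas (snd p)) (snd w))"
  unfolding tensmap_def
  by (rule sum.mono_neutral_left[OF assms]) (auto simp: supp_def)

lemma tensmap_fsupp:
  assumes "\<And>u. \<phi> (bas u) \<in> fsupp" "F \<in> fsupp"
  shows "tensmap \<phi> F \<in> fsupp"
proof -
  let ?A = "\<Union>p\<in>supp F. supp (\<phi> (bas (fst p)))" and ?B = "\<Union>p\<in>supp F. supp (\<phi> (bas (snd p)))"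
  have fin: "finite (?A \<times> ?B)" using assms by (auto simp: fsupp_def)
  have "supp (tensmap \<phi> F) \<subseteq> ?A \<times> ?B"
  proof
    fix w assume "w \<in> supp (tensmap \<phi> F)"
    then have "(\<Sum>p\<in>supp F. F p * \<phi> (bas (fst p)) (fst w) * \<phi> (bas (snd p)) (snd w)) \<noteq> 0"
      by (simp add: supp_def tensmap_def)
    then obtain p where "p \<in> supp F" "F p * \<phi> (bas (fst p)) (fst w) * \<phi> (bas (snd p)) (snd w) \<noteq> 0"
      by (meson sum.neutral)
    then have "p \<in> supp F" "fst w \<in> supp (\<phi> (bas (fst p)))" "snd w \<in> supp (\<phi> (bas (snd p)))" by (auto simp: supp_def)
    then show "w \<in> ?A \<times> ?B" by (cases w) auto
  qed
  with fin show ?thesis by (auto simp: fsupp_def intro: finite_subset)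
qed

lemma tensmap_comp:
  fixes \<phi> \<psi> :: "(idx \<Rightarrow> 'k::field) \<Rightarrow> (idx \<Rightarrow> 'k)"
  assumes "klinear \<phi>" "\<And>u. \<psi> (bas u) \<in> fsupp" "F \<in> fsupp"
  shows "tensmap \<phi> (tensmap \<psi> F) = tensmap (\<lambda>f. \<phi> (\<psi> f)) F"
proof
  fix w :: "idx \<times> idx"
  let ?A = "\<Union>p\<in>supp F. supp (\<psi> (bas (fst p)))" and ?B = "\<Union>p\<in>supp F. supp (\<psi> (bas (snd p)))"
  have fF: "finite (supp F)" using assms(3) by (simp add: fsupp_def)
  have fA: "finite ?A" and fB: "finite ?B" using assms(2,3) by (auto simp: fsupp_def)
  let ?G = "tensmap \<psi> F"
  have sG: "supp ?G \<subseteq> ?A \<times> ?B"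
  proof
    fix w assume "w \<in> supp ?G"
    then have "(\<Sum>p\<in>supp F. F p * \<psi> (bas (fst p)) (fst w) * \<psi> (bas (snd p)) (snd w)) \<noteq> 0"
      by (simp add: supp_def tensmap_def)
    then obtain p where "p \<in> supp F" "F p * \<psi> (bas (fst p)) (fst w) * \<psi> (bas (snd p)) (snd w) \<noteq> 0"
      by (meson sum.neutral)
    then have "p \<in> supp F" "fst w \<in> supp (\<psi> (bas (fst p)))" "snd w \<in> supp (\<psi> (bas (snd p)))" by (auto simp: supp_def)
    then show "w \<in> ?A \<times> ?B" by (cases w) auto
  qed
  have "tensmap \<phi> ?G w = (\<Sum>p'\<in>?A \<times> ?B. ?G p' * \<phi> (bas (fst p')) (fst w) * \<phi> (bas (snd p')) (snd w))"
    by (rule tensmap_over[OF _ sG]) (use fA fB in simp)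
  also have "\<dots> = (\<Sum>p'\<in>?A \<times> ?B. \<Sum>p\<in>supp F. F p * (\<psi> (bas (fst p)) (fst p') * \<phi> (bas (fst p')) (fst w)) * (\<psi> (bas (snd p)) (snd p') * \<phi> (bas (snd p')) (snd w)))"
    by (rule sum.cong[OF refl]) (simp add: tensmap_def sum_distrib_right sum_distrib_left mult_ac)
  also have "\<dots> = (\<Sum>p\<in>supp F. \<Sum>p'\<in>?A \<times> ?B. F p * (\<psi> (bas (fst p)) (fst p') * \<phi> (bas (fst p')) (fst w)) * (\<psi> (bas (snd p)) (snd p') * \<phi> (bas (snd p')) (snd w)))"
    by (rule sum.swap)
  also have "\<dots> = (\<Sum>p\<in>supp F. F p * (\<Sum>u\<in>?A. \<psi> (bas (fst p)) u * \<phi> (bas u) (fst w)) * (\<Sum>v\<in>?B. \<psi> (bas (snd p)) v * \<phi> (bas v) (snd w)))"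
    by (rule sum.cong[OF refl]) (simp add: sum.cartesian_product' sum_product sum_distrib_left mult_ac)
  also have "\<dots> = (\<Sum>p\<in>supp F. F p * \<phi> (\<psi> (bas (fst p))) (fst w) * \<phi> (\<psi> (bas (snd p))) (snd w))"
  proof (rule sum.cong[OF refl])
    fix p assume p: "p \<in> supp F"
    have "\<phi> (\<psi> (bas (fst p))) (fst w) = (\<Sum>u\<in>?A. \<psi> (bas (fst p)) u * \<phi> (bas u) (fst w))"
      by (rule lin_expand[OF assms(1) fA]) (use p in blast)
    moreover have "\<phi> (\<psi> (bas (snd p))) (snd w) = (\<Sum>v\<in>?B. \<psi> (bas (snd p)) v * \<phi> (bas v) (snd w))"
      by (rule lin_expand[OF assms(1) fB]) (use p in blast)
    ultimately show "F p * (\<Sum>u\<in>?A. \<psi> (bas (fst p)) u * \<phi> (bas u) (fst w)) * (\<Sum>v\<in>?B. \<psi> (bas (snd p)) v * \<phi> (bas v) (snd w))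
        = F p * \<phi> (\<psi> (bas (fst p))) (fst w) * \<phi> (\<psi> (bas (snd p))) (snd w)" by simp
  qed
  also have "\<dots> = tensmap (\<lambda>f. \<phi> (\<psi> f)) F w" by (simp add: tensmap_def)
  finally show "tensmap \<phi> ?G w = tensmap (\<lambda>f. \<phi> (\<psi> f)) F w" .
qed

lemma tensmap_cong: "(\<And>u. \<phi> (bas u) = \<psi> (bas u)) \<Longrightarrow> tensmap \<phi> F = tensmap \<psi> F"
  by (simp add: tensmap_def)

lemma tensmap_id:
  assumes "F \<in> fsupp"
  shows "tensmap (\<lambda>f. f) F = F"
proof
  fix w :: "idx \<times> idx"
  have "tensmap (\<lambda>f. f) F w = (\<Sum>p\<in>supp F. if p = w then F w else 0)"
    unfolding tensmap_def by (rule sum.cong) (auto simp: bas_def prod_eq_iff)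
  also have "\<dots> = F w" using assms by (auto simp: sum.delta' fsupp_def supp_def)
  finally show "tensmap (\<lambda>f. f) F w = F w" .
qed

lemma Delta_fsupp:
  assumes "f \<in> fsupp"
  shows "Delta q f \<in> fsupp"
proof -
  let ?S = "\<Union>u\<in>supp f. (\<lambda>b. ((fst u, b), (fst u + int b, snd u - b))) ` {..snd u}"
  have fin: "finite ?S" using assms by (auto simp: fsupp_def)
  have "supp (Delta q f) \<subseteq> ?S"
  proof
    fix z assume "z \<in> supp (Delta q f)"
    then have nz: "Delta q f z \<noteq> 0" by (simp add: supp_def)
    obtain a b c d where z: "z = ((a,b),(c,d))" by (metis prod.collapse)
    from nz have "c = a + int b" "f (a, b + d) \<noteq> 0"
      by (auto simp: Delta_eq[OF assms] z split: if_splits)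
    then show "z \<in> ?S"
      by (auto simp: z supp_def image_iff intro!: bexI[of _ "(a, b + d)"])
  qed
  with fin show ?thesis by (auto simp: fsupp_def intro: finite_subset)
qed


lemma Bij_mapsto: "\<phi> \<in> Bij S \<Longrightarrow> f \<in> S \<Longrightarrow> \<phi> f \<in> S"
  unfolding Bij_def bij_betw_def by blast

lemma AutcD:
  assumes "\<phi> \<in> Autc q"
  shows "\<phi> \<in> Bij Hc" "klinear \<phi>" "\<And>f. f \<in> Hc \<Longrightarrow> Delta q (\<phi> f) = tensmap \<phi> (Delta q f)"
    "\<And>f. f \<in> Hc \<Longrightarrow> eps (\<phi> f) = eps f"
  using assms unfolding Autc_def by blast+

lemma Autc_Hc: "\<phi> \<in> Autc q \<Longrightarrow> f \<in> Hc \<Longrightarrow> \<phi> f \<in> Hc"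
  by (rule Bij_mapsto[OF AutcD(1)])

lemma Autc_id: "(\<lambda>x\<in>Hc. x) \<in> Autc q"
proof -
  have "klinear (\<lambda>x\<in>(Hc :: (idx \<Rightarrow> 'a) set). x)"
    by (auto simp: klinear_def fsupp_add fsupp_smult)
  moreover have "Delta q f = tensmap (\<lambda>x\<in>Hc. x) (Delta q f)" if "f \<in> Hc" for f :: "idx \<Rightarrow> 'a"
  proof -
    have "tensmap (\<lambda>x\<in>Hc. x) (Delta q f) = tensmap (\<lambda>x. x) (Delta q f)"
      by (rule tensmap_cong) simp
    also have "\<dots> = Delta q f" by (rule tensmap_id[OF Delta_fsupp[OF that]])
    finally show ?thesis by simp
  qed
  ultimately show ?thesis by (auto simp: Autc_def id_Bij)
qed

lemma Autc_compose:
  assumes "\<phi> \<in> Autc q" "\<psi> \<in> Autc q"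
  shows "compose Hc \<phi> \<psi> \<in> Autc q"
proof -
  have B: "compose Hc \<phi> \<psi> \<in> Bij Hc" using AutcD(1)[OF assms(1)] AutcD(1)[OF assms(2)] by (rule compose_Bij)
  have c: "compose Hc \<phi> \<psi> f = \<phi> (\<psi> f)" if "f \<in> Hc" for f using that by (simp add: compose_def)
  have L: "klinear (compose Hc \<phi> \<psi>)"
    unfolding klinear_def
  proof (intro conjI ballI allI)
    fix f g :: "idx \<Rightarrow> 'a" assume f: "f \<in> Hc" and g: "g \<in> Hc"
    show "compose Hc \<phi> \<psi> (\<lambda>u. f u + g u) = (\<lambda>u. compose Hc \<phi> \<psi> f u + compose Hc \<phi> \<psi> g u)"
      using f g by (simp add: c fsupp_add klin_add[OF AutcD(2)[OF assms(2)]] klin_add[OF AutcD(2)[OF assms(1)]] Autc_Hc[OF assms(2)])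
  next
    fix c' :: 'a and f :: "idx \<Rightarrow> 'a" assume f: "f \<in> Hc"
    show "compose Hc \<phi> \<psi> (\<lambda>u. c' * f u) = (\<lambda>u. c' * compose Hc \<phi> \<psi> f u)"
      using f by (simp add: c fsupp_smult klin_smult[OF AutcD(2)[OF assms(2)]] klin_smult[OF AutcD(2)[OF assms(1)]] Autc_Hc[OF assms(2)])
  qed
  have D: "Delta q (compose Hc \<phi> \<psi> f) = tensmap (compose Hc \<phi> \<psi>) (Delta q f)"
    "eps (compose Hc \<phi> \<psi> f) = eps f" if f: "f \<in> Hc" for f
  proof -
    have "Delta q (compose Hc \<phi> \<psi> f) = tensmap \<phi> (tensmap \<psi> (Delta q f))"
      using f by (simp add: c AutcD(3)[OF assms(1)] AutcD(3)[OF assms(2)] Autc_Hc[OF assms(2)])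
    also have "\<dots> = tensmap (\<lambda>f. \<phi> (\<psi> f)) (Delta q f)"
      by (rule tensmap_comp[where \<psi>=\<psi>, OF AutcD(2)[OF assms(1)] Autc_Hc[OF assms(2) bas_in] Delta_fsupp[OF f]])
    also have "\<dots> = tensmap (compose Hc \<phi> \<psi>) (Delta q f)"
      by (rule tensmap_cong) (simp add: c)
    finally show "Delta q (compose Hc \<phi> \<psi> f) = tensmap (compose Hc \<phi> \<psi>) (Delta q f)" .
    show "eps (compose Hc \<phi> \<psi> f) = eps f"
      using f by (simp add: c AutcD(4)[OF assms(1)] AutcD(4)[OF assms(2)] Autc_Hc[OF assms(2)])
  qed
  show ?thesis using B L D by (auto simp: Autc_def)
qed

lemma Autc_inv:
  assumes "\<phi> \<in> Autc q"
  shows "(\<lambda>x\<in>Hc. inv_into Hc \<phi> x) \<in> Autc q"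
proof -
  let ?i = "\<lambda>x\<in>Hc. inv_into Hc \<phi> x"
  have Bp: "\<phi> \<in> Bij Hc" by (rule AutcD(1)[OF assms])
  then have bij: "bij_betw \<phi> Hc Hc" by (simp add: Bij_def)
  have B: "?i \<in> Bij Hc" using Bp by (rule restrict_inv_into_Bij)
  have iH: "?i f \<in> Hc" if "f \<in> Hc" for f using B that by (rule Bij_mapsto)
  have pi: "\<phi> (?i f) = f" if "f \<in> Hc" for f
    using that bij by (simp add: bij_betw_def f_inv_into_f)
  have ip: "?i (\<phi> f) = f" if "f \<in> Hc" for f
    using that bij Bij_mapsto[OF Bp that] by (simp add: bij_betw_def inv_into_f_f)
  have inj: "\<phi> f = \<phi> g \<Longrightarrow> f \<in> Hc \<Longrightarrow> g \<in> Hc \<Longrightarrow> f = g" for f g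
    using bij by (auto simp: bij_betw_def inj_on_def)
  have Lp: "klinear \<phi>" by (rule AutcD(2)[OF assms])
  have L: "klinear ?i"
    unfolding klinear_def
  proof (intro conjI ballI allI)
    fix f g :: "idx \<Rightarrow> 'a" assume f: "f \<in> Hc" and g: "g \<in> Hc"
    have "\<phi> (\<lambda>u. ?i f u + ?i g u) = (\<lambda>u. f u + g u)"
      by (subst klin_add[OF Lp iH[OF f] iH[OF g]]) (simp only: pi f g)
    also have "\<dots> = \<phi> (?i (\<lambda>u. f u + g u))" using pi fsupp_add[OF f g] by simp
    finally have e: "\<phi> (\<lambda>u. ?i f u + ?i g u) = \<phi> (?i (\<lambda>u. f u + g u))" .
    show "?i (\<lambda>u. f u + g u) = (\<lambda>u. ?i f u + ?i g u)"
      by (rule sym, rule inj[OF e fsupp_add[OF iH[OF f] iH[OF g]] iH[OF fsupp_add[OF f g]]])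
  next
    fix c :: 'a and f :: "idx \<Rightarrow> 'a" assume f: "f \<in> Hc"
    have "\<phi> (\<lambda>u. c * ?i f u) = (\<lambda>u. c * f u)"
      by (subst klin_smult[OF Lp iH[OF f]]) (simp only: pi f)
    also have "\<dots> = \<phi> (?i (\<lambda>u. c * f u))" using pi fsupp_smult[OF f] by simp
    finally have e: "\<phi> (\<lambda>u. c * ?i f u) = \<phi> (?i (\<lambda>u. c * f u))" .
    show "?i (\<lambda>u. c * f u) = (\<lambda>u. c * ?i f u)"
      by (rule sym, rule inj[OF e fsupp_smult[OF iH[OF f]] iH[OF fsupp_smult[OF f]]])
  qed
  have D: "Delta q (?i f) = tensmap ?i (Delta q f)" "eps (?i f) = eps f" if f: "f \<in> Hc" for f
  proof -
    have "Delta q (?i f) = tensmap (\<lambda>x. x) (Delta q (?i f))"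
      by (rule tensmap_id[symmetric, OF Delta_fsupp[OF iH[OF f]]])
    also have "\<dots> = tensmap (\<lambda>h. ?i (\<phi> h)) (Delta q (?i f))"
      by (rule tensmap_cong) (simp only: ip[OF bas_in])
    also have "\<dots> = tensmap ?i (tensmap \<phi> (Delta q (?i f)))"
      by (rule tensmap_comp[where \<psi>=\<phi>, symmetric, OF L Autc_Hc[OF assms bas_in] Delta_fsupp[OF iH[OF f]]])
    also have "tensmap \<phi> (Delta q (?i f)) = Delta q f"
      using AutcD(3)[OF assms iH[OF f]] pi[OF f] by simp
    finally show "Delta q (?i f) = tensmap ?i (Delta q f)" .
    show "eps (?i f) = eps f" using AutcD(4)[OF assms iH[OF f]] pi[OF f] by simp
  qed
  show ?thesis using B L D by (auto simp: Autc_def)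
qed

lemma BG_mult: "a \<in> Bij S \<Longrightarrow> b \<in> Bij S \<Longrightarrow> a \<otimes>\<^bsub>BijGroup S\<^esub> b = compose S a b"
  by (simp add: BijGroup_def)

lemma Autc_sub: "Autc q \<subseteq> Bij Hc" unfolding Autc_def by blast

lemma subgroup_Autc: "subgroup (Autc q) (BijGroup (Hc :: (idx \<Rightarrow> 'k::field) set))"
proof (rule group.subgroupI[OF group_BijGroup])
  show "Autc q \<subseteq> carrier (BijGroup Hc)" using Autc_sub by (simp add: BijGroup_def)
  show "Autc q \<noteq> {}" using Autc_id by blast
  fix a assume a: "a \<in> Autc q"
  show "inv\<^bsub>BijGroup Hc\<^esub> a \<in> Autc q"
  proof -
    have "a \<in> Bij Hc" using a Autc_sub by blast
    then have "inv\<^bsub>BijGroup Hc\<^esub> a = (\<lambda>x\<in>Hc. inv_into Hc a x)" by (rule inv_BijGroup)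
    then show ?thesis using Autc_inv[OF a] by simp
  qed
  fix b assume b: "b \<in> Autc q"
  show "a \<otimes>\<^bsub>BijGroup Hc\<^esub> b \<in> Autc q"
  proof -
    have "a \<in> Bij Hc" "b \<in> Bij Hc" using a b Autc_sub by blast+
    then have "a \<otimes>\<^bsub>BijGroup Hc\<^esub> b = compose Hc a b" by (rule BG_mult)
    then show ?thesis using Autc_compose[OF a b] by simp
  qed
qed

lemma group_AutcG: "group (AutcG (q :: 'k::field))"
  unfolding AutcG_def by (rule subgroup.subgroup_is_group[OF subgroup_Autc group_BijGroup])

lemma AutcG_carrier[simp]: "carrier (AutcG q) = Autc q" by (simp add: AutcG_def)

lemma AutcG_mult: "a \<in> Autc q \<Longrightarrow> b \<in> Autc q \<Longrightarrow> a \<otimes>\<^bsub>AutcG q\<^esub> b = compose Hc a b"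
proof -
  assume "a \<in> Autc q" "b \<in> Autc q"
  then have "a \<in> Bij Hc" "b \<in> Bij Hc" using Autc_sub by blast+
  then show ?thesis by (simp add: AutcG_def BijGroup_def)
qed

lemma AutcG_one: "\<one>\<^bsub>AutcG q\<^esub> = (\<lambda>x\<in>Hc. x)"
  by (simp add: AutcG_def BijGroup_def)

lemma AutcG_inv: "a \<in> Autc q \<Longrightarrow> inv\<^bsub>AutcG q\<^esub> a = (\<lambda>x\<in>Hc. inv_into Hc a x)"
proof -
  assume a: "a \<in> Autc q"
  have "inv\<^bsub>AutcG q\<^esub> a = inv\<^bsub>BijGroup Hc\<^esub> a"
    unfolding AutcG_def by (rule group.m_inv_consistent[OF group_BijGroup subgroup_Autc a])
  also have "\<dots> = (\<lambda>x\<in>Hc. inv_into Hc a x)" using a Autc_sub inv_BijGroup by blast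
  finally show ?thesis .
qed


lemma Delta_bas0: "Delta q (bas (s,0)) = bas ((s,0),(s,0))"
proof
  fix z :: "idx \<times> idx"
  obtain a b c d where z: "z = ((a,b),(c,d))" by (metis prod.collapse)
  show "Delta q (bas (s,0)) z = bas ((s,0),(s,0)) z"
    by (auto simp: Delta_eq[OF bas_in] z bas_apply)
qed

lemma tensmap_bas: "tensmap \<phi> (bas p) w = \<phi> (bas (fst p)) (fst w) * \<phi> (bas (snd p)) (snd w)"
  by (subst tensmap_over[of "{p}"]) (simp_all add: bas_apply)

lemma eps_over:
  assumes "finite A" "supp f \<subseteq> A"
  shows "eps f = (\<Sum>u\<in>A. f u * (if snd u = 0 then 1 else 0))"
  unfolding eps_def by (rule sum_supp_over[OF assms])

lemma eps_bas0: "eps (bas (s,0) :: idx \<Rightarrow> 'k::field) = 1"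
  by (simp add: eps_def bas_apply)

lemma grouplike:
  fixes g :: "idx \<Rightarrow> 'k::field"
  assumes g: "g \<in> Hc" and D: "Delta q g = (\<lambda>w. g (fst w) * g (snd w))" and e: "eps g = 1"
  shows "\<exists>r. g = bas (r,0)"
proof -
  have Dv: "g (fst z) * g (snd z) = (if fst (snd z) = fst (fst z) + int (snd (fst z))
     then g (fst (fst z), snd (fst z) + snd (snd z)) * cb q (snd (fst z) + snd (snd z)) (snd (fst z)) else 0)" for z
    using Delta_eq[OF g, of q z] D by simp
  have ne: "supp g \<noteq> {}"
  proof
    assume "supp g = {}" then have "eps g = 0" by (simp add: eps_def)
    with e show False by simp
  qed
  then obtain a b where ab: "(a,b) \<in> supp g" by auto
  have snd0: "n = 0" if "(x,n) \<in> supp g" for x n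
  proof -
    have "g (x,n) * g (x,n) \<noteq> 0" using that by (simp add: supp_def)
    then show ?thesis using Dv[of "((x,n),(x,n))"] by (auto split: if_splits)
  qed
  have b0: "b = 0" using snd0 ab by blast
  have uniq: "x = a" if "(x,n) \<in> supp g" for x n
  proof -
    have n0: "n = 0" using snd0 that by blast
    have "g (a,0) * g (x,0) \<noteq> 0" using that ab b0 n0 by (simp add: supp_def)
    then show ?thesis using Dv[of "((a,0),(x,0))"] by (auto split: if_splits)
  qed
  have "g (a,0) * g (a,0) = g (a,0)" using Dv[of "((a,0),(a,0))"] by simp
  moreover have "g (a,0) \<noteq> 0" using ab b0 by (simp add: supp_def)
  ultimately have one: "g (a,0) = 1" by simp
  have "g = bas (a,0)"
  proof
    fix v :: idx
    obtain x n where v: "v = (x,n)" by fastforce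
    show "g v = bas (a,0) v"
    proof (cases "v \<in> supp g")
      case True
      then show ?thesis using uniq snd0 one v by (auto simp: bas_def)
    next
      case False
      then have "g v = 0" by (simp add: supp_def)
      moreover have "v \<noteq> (a,0)" using False ab b0 by auto
      ultimately show ?thesis by (simp add: bas_def)
    qed
  qed
  then show ?thesis by blast
qed

lemma Autc_grouplike:
  assumes "\<phi> \<in> Autc q"
  shows "\<exists>r. \<phi> (bas (s,0)) = bas (r,0)"
proof (rule grouplike)
  show "\<phi> (bas (s,0)) \<in> Hc" by (rule Autc_Hc[OF assms bas_in])
  show "Delta q (\<phi> (bas (s,0))) = (\<lambda>w. \<phi> (bas (s,0)) (fst w) * \<phi> (bas (s,0)) (snd w))"
    using AutcD(3)[OF assms bas_in, of "(s,0)"] by (simp add: Delta_bas0 tensmap_bas fun_eq_iff)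
  show "eps (\<phi> (bas (s,0))) = 1"
    using AutcD(4)[OF assms bas_in, of "(s,0)"] by (simp add: eps_bas0)
qed

lemma skew:
  fixes w :: "idx \<Rightarrow> 'k::field"
  assumes q: "\<forall>n::nat. n > 0 \<longrightarrow> q ^ n \<noteq> 1"
  and w: "w \<in> Hc" and D: "Delta q w = (\<lambda>z. w (fst z) * bas (c,0) (snd z) + bas (a,0) (fst z) * w (snd z))"
  shows "c = a + 1 \<or> (\<exists>l. w = (\<lambda>u. l * (bas (a,0) u - bas (c,0) u)))"
proof -
  have Dv: "w (fst z) * bas (c,0) (snd z) + bas (a,0) (fst z) * w (snd z) = (if fst (snd z) = fst (fst z) + int (snd (fst z))
     then w (fst (fst z), snd (fst z) + snd (snd z)) * cb q (snd (fst z) + snd (snd z)) (snd (fst z)) else 0)" for z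
    using Delta_eq[OF w, of q z] D by simp
  show ?thesis
  proof (cases "\<exists>x m. (x,m) \<in> supp w \<and> m \<ge> 1")
    case True
    then obtain x m where xm: "(x,m) \<in> supp w" "m \<ge> 1" by blast
    have nz: "w (x,m) \<noteq> 0" using xm by (simp add: supp_def)
    have 1: "x + int m = c"
    proof (rule ccontr)
      assume "x + int m \<noteq> c"
      then show False using Dv[of "((x,m),(x + int m, 0))"] xm nz by (auto simp: bas_def)
    qed
    have 2: "x = a"
    proof (rule ccontr)
      assume "x \<noteq> a"
      then show False using Dv[of "((x,0),(x, m))"] xm nz by (auto simp: bas_def)
    qed
    have 3: "m = 1"
    proof (rule ccontr)
      assume "m \<noteq> 1"
      then have m2: "m \<ge> 2" using xm by simp
      have "cb q m 1 \<noteq> 0" using cb_one_nz[OF q] m2 by simp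
      then show False using Dv[of "((x,1),(x + 1, m - 1))"] m2 nz by (auto simp: bas_def)
    qed
    show ?thesis using 1 2 3 by simp
  next
    case False
    have s0: "v \<in> supp w \<Longrightarrow> snd v = 0" for v using False by (cases v) fastforce
    have in2: "fst v = a \<or> fst v = c" if "v \<in> supp w" for v
    proof (rule ccontr)
      assume "\<not> (fst v = a \<or> fst v = c)"
      moreover have "w v \<noteq> 0" using that by (simp add: supp_def)
      ultimately show False using Dv[of "(v,v)"] s0[OF that] by (cases v) (auto simp: bas_def)
    qed
    show ?thesis
    proof (cases "a = c")
      case True
      have "w = (\<lambda>u. 0 * (bas (a,0) u - bas (c,0) u))"
      proof
        fix v
        show "w v = 0 * (bas (a,0) v - bas (c,0) v)"
        proof (cases "v \<in> supp w")
          case False then show ?thesis by (simp add: supp_def)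
        next
          case vin: True
          have v: "v = (a,0)" using in2[OF vin] s0[OF vin] True by (cases v) auto
          have "w (a,0) + w (a,0) = w (a,0)" using Dv[of "((a,0),(a,0))"] True by (simp add: bas_def)
          then have "w (a,0) = 0" by (metis add_cancel_left_right add_cancel_right_right)
          then show ?thesis by (simp add: v)
        qed
      qed
      then show ?thesis by blast
    next
      case ne: False
      have wc: "w (c,0) = - w (a,0)"
        using Dv[of "((a,0),(c,0))"] ne by (auto simp: bas_def eq_neg_iff_add_eq_0 add.commute)
      have "w = (\<lambda>u. w (a,0) * (bas (a,0) u - bas (c,0) u))"
      proof
        fix v
        show "w v = w (a,0) * (bas (a,0) v - bas (c,0) v)"
        proof (cases "v \<in> supp w")
          case False
          then have "w v = 0" by (simp add: supp_def)
          then show ?thesis using wc ne by (auto simp: bas_def)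
        next
          case vin: True
          then have "v = (a,0) \<or> v = (c,0)" using in2[OF vin] s0[OF vin] by (cases v) auto
          then show ?thesis using wc ne by (auto simp: bas_def)
        qed
      qed
      then show ?thesis by blast
    qed
  qed
qed


lemma bas_inj: "(bas u :: 'a \<Rightarrow> 'k::zero_neq_one) = bas v \<Longrightarrow> u = v"
  by (metis bas_def zero_neq_one)

lemma klin_comb:
  fixes \<phi> :: "(idx \<Rightarrow> 'k::field) \<Rightarrow> (idx \<Rightarrow> 'k)"
  assumes "klinear \<phi>" "f \<in> Hc" "g \<in> Hc"
  shows "\<phi> (\<lambda>u. l * (f u - g u)) = (\<lambda>u. l * (\<phi> f u - \<phi> g u))"
proof -
  have e: "(\<lambda>u. l * (f u - g u)) = (\<lambda>u. (\<lambda>u. l * f u) u + (\<lambda>u. (-l) * g u) u)"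
    by (simp add: algebra_simps)
  have "\<phi> (\<lambda>u. (\<lambda>u. l * f u) u + (\<lambda>u. (-l) * g u) u) = (\<lambda>u. \<phi> (\<lambda>u. l * f u) u + \<phi> (\<lambda>u. (-l) * g u) u)"
    by (rule klin_add[OF assms(1) fsupp_smult[OF assms(2)] fsupp_smult[OF assms(3)]])
  also have "\<dots> = (\<lambda>u. l * (\<phi> f u - \<phi> g u))"
    unfolding klin_smult[OF assms(1) assms(2)] klin_smult[OF assms(1) assms(3)] by (simp add: algebra_simps)
  finally show ?thesis using e by simp
qed

lemma Delta_skewbas:
  "Delta q (bas (s,1)) = (\<lambda>w. bas ((s,1),(s+1,0)) w + bas ((s,0),(s,1)) w)"
proof
  fix z :: "idx \<times> idx"
  obtain a b c d where z: "z = ((a,b),(c,d))" by (metis prod.collapse)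
  have "b + d = 1 \<longleftrightarrow> (b = 0 \<and> d = 1) \<or> (b = 1 \<and> d = 0)" by auto
  then show "Delta q (bas (s,1)) z = bas ((s,1),(s+1,0)) z + bas ((s,0),(s,1)) z"
    by (auto simp: Delta_eq[OF bas_in] z bas_apply)
qed

lemma Autc_step:
  fixes q :: "'k::field"
  assumes q: "\<forall>n::nat. n > 0 \<longrightarrow> q ^ n \<noteq> 1" and phi: "\<phi> \<in> Autc q"
    and r: "\<phi> (bas (s,0)) = bas (r,0)"
  shows "\<phi> (bas (s+1,0)) = bas (r+1,0)"
proof -
  obtain t where t: "\<phi> (bas (s+1,0)) = bas (t,0)" using Autc_grouplike[OF phi] by blast
  let ?z = "bas (s,1) :: idx \<Rightarrow> 'k"
  let ?p1 = "((s,1::nat),(s+1,0::nat))" and ?p2 = "((s,0::nat),(s,1::nat))"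
  have sF: "supp (\<lambda>w. bas ?p1 w + (bas ?p2 w :: 'k)) \<subseteq> {?p1, ?p2}" by (auto simp: supp_def bas_apply)
  have "Delta q (\<phi> ?z) = tensmap \<phi> (Delta q ?z)" by (rule AutcD(3)[OF phi bas_in])
  also have "\<dots> = (\<lambda>w. \<phi> ?z (fst w) * bas (t,0) (snd w) + bas (r,0) (fst w) * \<phi> ?z (snd w))"
  proof
    fix w
    show "tensmap \<phi> (Delta q ?z) w = \<phi> ?z (fst w) * bas (t,0) (snd w) + bas (r,0) (fst w) * \<phi> ?z (snd w)"
      unfolding Delta_skewbas
      by (subst tensmap_over[OF _ sF]) (simp_all add: bas_apply r[symmetric] t[symmetric])
  qed
  finally have D: "Delta q (\<phi> ?z) = (\<lambda>w. \<phi> ?z (fst w) * bas (t,0) (snd w) + bas (r,0) (fst w) * \<phi> ?z (snd w))" .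
  have "t = r + 1 \<or> (\<exists>l. \<phi> ?z = (\<lambda>u. l * (bas (r,0) u - bas (t,0) u)))"
    by (rule skew[OF q Autc_Hc[OF phi bas_in] D])
  then show ?thesis
  proof
    assume "t = r + 1" then show ?thesis using t by simp
  next
    assume "\<exists>l. \<phi> ?z = (\<lambda>u. l * (bas (r,0) u - bas (t,0) u))"
    then obtain l where l: "\<phi> ?z = (\<lambda>u. l * (bas (r,0) u - bas (t,0) u))" by blast
    have "\<phi> ?z = \<phi> (\<lambda>u. l * (bas (s,0) u - bas (s+1,0) u))"
      using l by (simp add: klin_comb[OF AutcD(2)[OF phi] bas_in bas_in] r t)
    moreover have "inj_on \<phi> Hc" using AutcD(1)[OF phi] by (simp add: Bij_def bij_betw_def)
    moreover have "(\<lambda>u. l * (bas (s,0) u - bas (s+1,0) u)) \<in> Hc"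
      unfolding fsupp_def mem_Collect_eq by (rule finite_subset[of _ "{(s,0),(s+1,0)}"]) (auto simp: supp_def bas_apply)
    ultimately have "?z = (\<lambda>u. l * (bas (s,0) u - bas (s+1,0) u))"
      by (meson bas_in inj_onD)
    from fun_cong[OF this, of "(s,1)"] show ?thesis by (simp add: bas_apply)
  qed
qed

lemma Autc_shift:
  fixes q :: "'k::field"
  assumes q: "\<forall>n::nat. n > 0 \<longrightarrow> q ^ n \<noteq> 1" and phi: "\<phi> \<in> Autc q"
    and r: "\<phi> (bas (0,0)) = bas (r,0)"
  shows "\<phi> (bas (s,0)) = bas (s + r,0)"
proof (induction s rule: int_induct[where k=0])
  case base show ?case using r by simp
next
  case (step1 i)
  then show ?case using Autc_step[OF q phi step1(2)] by (simp add: add_ac)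
next
  case (step2 i)
  obtain t where t: "\<phi> (bas (i - 1,0)) = bas (t,0)" using Autc_grouplike[OF phi] by blast
  have "\<phi> (bas (i - 1 + 1,0)) = bas (t+1,0)" by (rule Autc_step[OF q phi t])
  then have "bas (i + r, 0) = (bas (t + 1, 0) :: idx \<Rightarrow> 'k)" using step2(2) by simp
  then have "t = i - 1 + r" using bas_inj by fastforce
  then show ?case using t by simp
qed


lemma theta_app: "f \<in> Hc \<Longrightarrow> theta r f = (\<lambda>u. f (fst u - r, snd u))"
  by (simp add: theta_def)

lemma theta_Hc:
  assumes f: "f \<in> Hc" shows "theta r f \<in> Hc"
proof -
  have "supp (\<lambda>u. f (fst u - r, snd u)) \<subseteq> (\<lambda>v. (fst v + r, snd v)) ` supp f"
  proof
    fix u assume "u \<in> supp (\<lambda>u. f (fst u - r, snd u))"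
    then have "(fst u - r, snd u) \<in> supp f" by (simp add: supp_def)
    then show "u \<in> (\<lambda>v. (fst v + r, snd v)) ` supp f" by (force intro: image_eqI[of _ _ "(fst u - r, snd u)"])
  qed
  then show ?thesis using f by (auto simp: theta_app fsupp_def intro: finite_subset)
qed

lemma theta_bas: "theta r (bas (n,m)) = bas (n + r, m)"
  by (auto simp: theta_app bas_apply fun_eq_iff)

lemma theta_comp: "f \<in> Hc \<Longrightarrow> theta r (theta s f) = theta (r + s) f"
  using theta_app[OF theta_Hc, of f r s] theta_app[of f s] theta_app[of f "r+s"] by (simp add: algebra_simps)

lemma theta_0: "theta 0 = (\<lambda>x\<in>Hc. x)"
  by (auto simp: theta_def fun_eq_iff)

lemma theta_compose: "compose Hc (theta r) (theta s) = theta (r + s)"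
proof
  fix f :: "idx \<Rightarrow> 'k::field"
  show "compose Hc (theta r) (theta s) f = theta (r + s) f"
    by (cases "f \<in> Hc") (simp_all add: compose_def theta_comp, simp add: theta_def)
qed

lemma theta_Bij: "theta r \<in> Bij (Hc :: (idx \<Rightarrow> 'k::field) set)"
proof -
  have ext: "theta r \<in> extensional (Hc :: (idx \<Rightarrow> 'k) set)" by (simp add: theta_def)
  have inj: "inj_on (theta r) (Hc :: (idx \<Rightarrow> 'k) set)"
  proof (rule inj_onI)
    fix f g :: "idx \<Rightarrow> 'k" assume f: "f \<in> Hc" and g: "g \<in> Hc" and e: "theta r f = theta r g"
    have "theta (-r) (theta r f) = theta (-r) (theta r g)" using e by simp
    then show "f = g" using f g by (simp add: theta_comp theta_0)
  qed
  have surj: "theta r ` Hc = (Hc :: (idx \<Rightarrow> 'k) set)"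
  proof
    show "theta r ` Hc \<subseteq> (Hc :: (idx \<Rightarrow> 'k) set)" using theta_Hc by blast
    show "(Hc :: (idx \<Rightarrow> 'k) set) \<subseteq> theta r ` Hc"
    proof
      fix f :: "idx \<Rightarrow> 'k" assume f: "f \<in> Hc"
      have "f = theta r (theta (-r) f)" using f by (simp add: theta_comp theta_0)
      then show "f \<in> theta r ` Hc" using theta_Hc[OF f] by blast
    qed
  qed
  show ?thesis using ext inj surj by (simp add: Bij_def bij_betw_def)
qed

lemma theta_klinear: "klinear (theta r)"
  unfolding klinear_def by (simp add: theta_app fsupp_add fsupp_smult)

lemma theta_eps:
  assumes f: "f \<in> Hc" shows "eps (theta r f) = eps f"
proof -
  let ?A = "(\<lambda>v. (fst v + r, snd v)) ` supp f"
  have fA: "finite ?A" using f by (simp add: fsupp_def)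
  have sA: "supp (theta r f) \<subseteq> ?A"
  proof
    fix u assume "u \<in> supp (theta r f)"
    then have "(fst u - r, snd u) \<in> supp f" using f by (simp add: supp_def theta_app)
    then show "u \<in> ?A" by (force intro: image_eqI[of _ _ "(fst u - r, snd u)"])
  qed
  have "eps (theta r f) = (\<Sum>u\<in>?A. theta r f u * (if snd u = 0 then 1 else 0))"
    by (rule eps_over[OF fA sA])
  also have "\<dots> = (\<Sum>v\<in>supp f. f v * (if snd v = 0 then 1 else 0))"
    by (subst sum.reindex) (auto simp: inj_on_def theta_app f)
  also have "\<dots> = eps f" by (simp add: eps_def)
  finally show ?thesis .
qed

lemma tensmap_theta:
  assumes F: "F \<in> fsupp"
  shows "tensmap (theta r) F w = F ((fst (fst w) - r, snd (fst w)), (fst (snd w) - r, snd (snd w)))"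
proof -
  let ?p0 = "((fst (fst w) - r, snd (fst w)), (fst (snd w) - r, snd (snd w)))"
  have "tensmap (theta r) F w = (\<Sum>p\<in>supp F. if p = ?p0 then F p else 0)"
    unfolding tensmap_def
  proof (rule sum.cong[OF refl])
    fix p :: "idx \<times> idx"
    obtain a b c d where p: "p = ((a,b),(c,d))" by (metis prod.collapse)
    show "F p * theta r (bas (fst p)) (fst w) * theta r (bas (snd p)) (snd w) = (if p = ?p0 then F p else 0)"
      by (cases w) (auto simp: p theta_bas bas_apply)
  qed
  also have "\<dots> = F ?p0" using F by (auto simp: sum.delta' fsupp_def supp_def)
  finally show ?thesis .
qed

lemma theta_Delta:
  assumes f: "f \<in> Hc" shows "Delta q (theta r f) = tensmap (theta r) (Delta q f)"
proof
  fix z :: "idx \<times> idx"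
  obtain a b c d where z: "z = ((a,b),(c,d))" by (metis prod.collapse)
  show "Delta q (theta r f) z = tensmap (theta r) (Delta q f) z"
    unfolding z tensmap_theta[OF Delta_fsupp[OF f]] Delta_eq[OF f] Delta_eq[OF theta_Hc[OF f]]
    by (simp add: theta_app[OF f])
qed

lemma theta_Autc: "theta r \<in> Autc q"
  unfolding Autc_def using theta_Bij theta_klinear theta_Delta theta_eps by blast


lemma AutcG_theta_mult: "theta r \<otimes>\<^bsub>AutcG (q::'k::field)\<^esub> theta s = theta (r + s)"
proof -
  have "theta r \<otimes>\<^bsub>AutcG q\<^esub> theta s = compose Hc (theta r) (theta s)" by (rule AutcG_mult[OF theta_Autc theta_Autc])
  also have "\<dots> = theta (r + s)" by (rule theta_compose)
  finally show ?thesis .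
qed

lemma Theta_subgroup: "subgroup (Theta :: ((idx \<Rightarrow> 'k) \<Rightarrow> (idx \<Rightarrow> 'k)) set) (AutcG (q::'k::field))"
proof -
  interpret G: group "AutcG q" by (rule group_AutcG)
  have invt: "inv\<^bsub>AutcG q\<^esub> theta r = theta (-r)" for r
  proof (rule G.inv_equality)
    show "theta (-r) \<otimes>\<^bsub>AutcG q\<^esub> theta r = \<one>\<^bsub>AutcG q\<^esub>"
      by (simp add: AutcG_theta_mult AutcG_one theta_0)
  qed (simp_all add: theta_Autc)
  show ?thesis
  proof (rule G.subgroupI)
    show "(Theta :: ((idx \<Rightarrow> 'k) \<Rightarrow> (idx \<Rightarrow> 'k)) set) \<subseteq> carrier (AutcG q)"
      by (auto simp: Theta_def theta_Autc)
    show "(Theta :: ((idx \<Rightarrow> 'k) \<Rightarrow> (idx \<Rightarrow> 'k)) set) \<noteq> {}" by (simp add: Theta_def)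
    fix a :: "(idx \<Rightarrow> 'k) \<Rightarrow> (idx \<Rightarrow> 'k)" assume "a \<in> Theta"
    then obtain r where a: "a = theta r" by (auto simp: Theta_def)
    show "inv\<^bsub>AutcG q\<^esub> a \<in> Theta" by (simp add: a invt Theta_def)
    fix b :: "(idx \<Rightarrow> 'k) \<Rightarrow> (idx \<Rightarrow> 'k)" assume "b \<in> Theta"
    then obtain s where b: "b = theta s" by (auto simp: Theta_def)
    show "a \<otimes>\<^bsub>AutcG q\<^esub> b \<in> Theta" by (simp add: a b AutcG_theta_mult Theta_def)
  qed
qed

lemma Aut0_sub: "Aut0 q \<subseteq> Autc q" by (auto simp: Aut0_def)

lemma Aut0_subgroup: "subgroup (Aut0 q) (AutcG (q::'k::field))"
proof -
  interpret G: group "AutcG q" by (rule group_AutcG)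
  show ?thesis
  proof (rule G.subgroupI)
    show "Aut0 q \<subseteq> carrier (AutcG q)" using Aut0_sub by simp
    have "(\<lambda>x\<in>Hc. x) \<in> Aut0 q" using Autc_id[of q] by (simp add: Aut0_def)
    then show "Aut0 q \<noteq> {}" by blast
    fix a assume a: "a \<in> Aut0 q"
    then have aA: "a \<in> Autc q" and a0: "a (bas (0,0)) = bas (0,0)" by (auto simp: Aut0_def)
    have "inj_on a Hc" using AutcD(1)[OF aA] by (simp add: Bij_def bij_betw_def)
    then have "inv_into Hc a (a (bas (0,0))) = bas (0,0)" by (simp add: inv_into_f_f)
    then show "inv\<^bsub>AutcG q\<^esub> a \<in> Aut0 q"
      using AutcG_inv[OF aA] Autc_inv[OF aA] a0 by (simp add: Aut0_def)
    fix b assume b: "b \<in> Aut0 q"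
    then have bA: "b \<in> Autc q" and b0: "b (bas (0,0)) = bas (0,0)" by (auto simp: Aut0_def)
    show "a \<otimes>\<^bsub>AutcG q\<^esub> b \<in> Aut0 q"
      using AutcG_mult[OF aA bA] Autc_compose[OF aA bA] a0 b0 by (simp add: Aut0_def compose_def)
  qed
qed

theorem proposition2p4:
  fixes q :: "'k::field"
  assumes "q \<noteq> 0" and "\<forall>n::nat. n > 0 \<longrightarrow> q ^ n \<noteq> 1"
  shows "Aut0 q \<lhd> AutcG q
       \<and> subgroup (Theta :: ((idx \<Rightarrow> 'k) \<Rightarrow> (idx \<Rightarrow> 'k)) set) (AutcG q)
       \<and> Aut0 q \<inter> Theta = {\<one>\<^bsub>AutcG q\<^esub>}
       \<and> Aut0 q <#>\<^bsub>AutcG q\<^esub> Theta = carrier (AutcG q)"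
proof -
  note qq = assms(2)
  interpret G: group "AutcG q" by (rule group_AutcG)
  have app_mult: "(x \<otimes>\<^bsub>AutcG q\<^esub> y) f = x (y f)" if "x \<in> Autc q" "y \<in> Autc q" "f \<in> Hc" for x y f
    using AutcG_mult[OF that(1,2)] that(3) by (simp add: compose_def)
  have N: "Aut0 q \<lhd> AutcG q"
    unfolding G.normal_inv_iff
  proof (intro conjI ballI Aut0_subgroup)
    fix x h assume x: "x \<in> carrier (AutcG q)" and h: "h \<in> Aut0 q"
    have xA: "x \<in> Autc q" using x by simp
    have hA: "h \<in> Autc q" and h0: "h (bas (0,0)) = bas (0,0)" using h by (auto simp: Aut0_def)
    let ?xi = "inv\<^bsub>AutcG q\<^esub> x"
    have xiA: "?xi \<in> Autc q" using G.inv_closed[OF x] by simp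
    obtain t where t: "?xi (bas (0,0)) = bas (t,0)" using Autc_grouplike[OF xiA] by blast
    have ht: "h (bas (t,0)) = bas (t,0)" using Autc_shift[OF qq hA h0, of t] by simp
    have "(x \<otimes>\<^bsub>AutcG q\<^esub> ?xi) (bas (0,0)) = bas (0,0)"
      using G.r_inv[OF x] by (simp add: AutcG_one)
    then have xt: "x (bas (t,0)) = bas (0,0)" using app_mult[OF xA xiA bas_in] t by simp
    have prodA: "x \<otimes>\<^bsub>AutcG q\<^esub> h \<in> Autc q" using G.m_closed[OF x] hA by simp
    have "(x \<otimes>\<^bsub>AutcG q\<^esub> h \<otimes>\<^bsub>AutcG q\<^esub> ?xi) (bas (0,0)) = bas (0,0)"
      using app_mult[OF prodA xiA bas_in] app_mult[OF xA hA bas_in] t ht xt by simp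
    moreover have "x \<otimes>\<^bsub>AutcG q\<^esub> h \<otimes>\<^bsub>AutcG q\<^esub> ?xi \<in> Autc q"
      using G.m_closed[OF G.m_closed[OF x] G.inv_closed[OF x]] hA by simp
    ultimately show "x \<otimes>\<^bsub>AutcG q\<^esub> h \<otimes>\<^bsub>AutcG q\<^esub> ?xi \<in> Aut0 q" by (simp add: Aut0_def)
  qed
  have I: "Aut0 q \<inter> Theta = {\<one>\<^bsub>AutcG q\<^esub>}"
  proof
    show "{\<one>\<^bsub>AutcG q\<^esub>} \<subseteq> Aut0 q \<inter> Theta"
      using Autc_id by (auto simp: AutcG_one Aut0_def Theta_def theta_0[symmetric] theta_bas)
    show "Aut0 q \<inter> Theta \<subseteq> {\<one>\<^bsub>AutcG q\<^esub>}"
    proof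
      fix a assume "a \<in> Aut0 q \<inter> Theta"
      then obtain r where a: "a = theta r" and a0: "a (bas (0,0)) = bas (0,0)" by (auto simp: Theta_def Aut0_def)
      have "bas (r,0) = (bas (0,0) :: idx \<Rightarrow> 'k)" using a0 by (simp add: a theta_bas)
      then have "r = 0" using bas_inj by fastforce
      then show "a \<in> {\<one>\<^bsub>AutcG q\<^esub>}" by (simp add: a theta_0 AutcG_one)
    qed
  qed
  have P: "Aut0 q <#>\<^bsub>AutcG q\<^esub> Theta = carrier (AutcG q)"
  proof
    show "Aut0 q <#>\<^bsub>AutcG q\<^esub> Theta \<subseteq> carrier (AutcG q)"
    proof
      fix y assume "y \<in> Aut0 q <#>\<^bsub>AutcG q\<^esub> Theta"
      then obtain h k where h: "h \<in> Aut0 q" and k: "k \<in> Theta" and y: "y = h \<otimes>\<^bsub>AutcG q\<^esub> k"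
        unfolding set_mult_def by blast
      have "h \<in> carrier (AutcG q)" using h Aut0_sub by auto
      moreover have "k \<in> carrier (AutcG q)" using k theta_Autc by (auto simp: Theta_def)
      ultimately show "y \<in> carrier (AutcG q)" using y G.m_closed by simp
    qed
    show "carrier (AutcG q) \<subseteq> Aut0 q <#>\<^bsub>AutcG q\<^esub> Theta"
    proof
      fix \<phi> assume phi: "\<phi> \<in> carrier (AutcG q)"
      then have pA: "\<phi> \<in> Autc q" by simp
      obtain r where r: "\<phi> (bas (0,0)) = bas (r,0)" using Autc_grouplike[OF pA] by blast
      let ?psi = "\<phi> \<otimes>\<^bsub>AutcG q\<^esub> theta (-r)"
      have psiA: "?psi \<in> Autc q" using G.m_closed[OF phi, of "theta (-r)"] theta_Autc[of "-r" q] by simp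
      have "?psi (bas (0,0)) = \<phi> (bas (-r,0))"
        using app_mult[OF pA theta_Autc bas_in] by (simp add: theta_bas)
      also have "\<dots> = bas (0,0)" using Autc_shift[OF qq pA r, of "-r"] by simp
      finally have psi0: "?psi \<in> Aut0 q" using psiA by (simp add: Aut0_def)
      have "?psi \<otimes>\<^bsub>AutcG q\<^esub> theta r = \<phi> \<otimes>\<^bsub>AutcG q\<^esub> (theta (-r) \<otimes>\<^bsub>AutcG q\<^esub> theta r)"
        using G.m_assoc[OF phi] theta_Autc[of "-r" q] theta_Autc[of r q] by simp
      also have "\<dots> = \<phi>"
        using G.r_one[OF phi] by (simp add: AutcG_theta_mult AutcG_one theta_0)
      finally have "\<phi> = ?psi \<otimes>\<^bsub>AutcG q\<^esub> theta r" by simp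
      then show "\<phi> \<in> Aut0 q <#>\<^bsub>AutcG q\<^esub> Theta"
        unfolding set_mult_def Theta_def using psi0 by blast
    qed
  qed
  show ?thesis using N Theta_subgroup I P by blast
qed

end
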